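(* Define numbers $m_{n,k}$ ($n,k\ge0$) by $m_{0,k}=\delta_{0k}$ and $m_{n,k}=(m_{n-1,0}+m_{n-1,1}+\cdots+m_{n-1,k})^{-1}$ for $n\ge1$. Then for each fixed $k\ge0$, $$m_{0,k}\le m_{2,k}\le m_{4,k}\le\cdots,\qquad m_{1,k}\ge m_{3,k}\ge m_{5,k}\ge\cdots,$$ and $\lim_{n\to\infty}m_{2n,k}=\lim_{n\to\infty}m_{2n+1,k}=m_k$. Furthermore $\lim_{k\to\infty}m_{n,k}=0$ for every $n\ge2$; consequently the probability measure $\mu_n=\widehat T^{\circ n}(\delta_0)$, whose moment sequence is $(m_{n,k})_k$, has no mass at $t=1$ for $n\ge2$.
   Context: Let $(m_n)_{n\ge0}$ be the unique sequence of positive reals with $m_0=1$ and $(1+m_1+\cdots+m_n)\,m_n=1$ for $n\ge1$. For a normalized Hausdorff moment sequence $\mathbf a=(a_n)_n$ (i.e. $a_n=\int_0^1 t^n\,d\nu(t)$ for a probability measure $\nu$ on $[0,1]$), $T(\mathbf a)_n=1/(a_0+\cdots+a_n)$ defines again a normalized Hausdorff moment sequence; $\widehat T$ denotes the corresponding map on probability measures on $[0,1]$ (so $\widehat T(\nu)$ has moments $T(\mathbf a)$). $\delta_q$ denotes the unit point mass at $q$. *)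

theory Defs
  imports "HOL-Probability.Probability"
begin

primrec mnk :: "nat \<Rightarrow> nat \<Rightarrow> real" where
  "mnk 0 k = (if k = 0 then 1 else 0)"
| "mnk (Suc n) k = 1 / (\<Sum>j\<le>k. mnk n j)"

end

theory Submission
  imports Defs
begin

lemma mnk_at0: "mnk n 0 = 1"
  by (induction n) auto

lemma mnk_nonneg: "0 \<le> mnk n k"
proof (induction n arbitrary: k)
  case 0 then show ?case by simp
next
  case (Suc n) then show ?case by (simp add: sum_nonneg)
qed

lemma mnk_sum_ge1: "1 \<le> (\<Sum>j\<le>k. mnk n j)"
proof -
  have "mnk n 0 \<le> (\<Sum>j\<le>k. mnk n j)"
    by (rule member_le_sum) (auto simp: mnk_nonneg)
  then show ?thesis by (simp add: mnk_at0)
qed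

lemma mnk_le1: "mnk n k \<le> 1"
proof (cases n)
  case 0 then show ?thesis by simp
next
  case (Suc n')
  have "1 \<le> (\<Sum>j\<le>k. mnk n' j)" by (rule mnk_sum_ge1)
  then show ?thesis using Suc by simp
qed

lemma mnk_anti:
  assumes "\<And>k. mnk p k \<le> mnk q k"
  shows "mnk (Suc q) k \<le> mnk (Suc p) k"
proof -
  have a: "(\<Sum>j\<le>k. mnk p j) \<le> (\<Sum>j\<le>k. mnk q j)" by (intro sum_mono assms)
  have b: "1 \<le> (\<Sum>j\<le>k. mnk p j)" by (rule mnk_sum_ge1)
  show ?thesis using a b by (simp add: frac_le)
qed

lemma mnk_mono_step: "\<forall>k. mnk (2*n) k \<le> mnk (2*n+2) k"
proof (induction n)
  case 0
  show ?case by (auto simp: mnk_nonneg mnk_at0 simp del: mnk.simps(2))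
next
  case (Suc n)
  have "\<And>k. mnk (Suc (2*n+2)) k \<le> mnk (Suc (2*n)) k"
    by (rule mnk_anti) (use Suc in auto)
  then have "\<And>k. mnk (Suc (Suc (2*n))) k \<le> mnk (Suc (Suc (2*n+2))) k"
    using Suc mnk_anti by blast
  then show ?case by (simp add: numeral_eq_Suc)
qed

lemma mnk_inc: "incseq (\<lambda>n. mnk (2*n) k)"
  by (rule incseq_SucI) (use mnk_mono_step in auto)

lemma mnk_dec: "decseq (\<lambda>n. mnk (2*n+1) k)"
proof (rule decseq_SucI)
  fix n
  have "mnk (Suc (2*n+2)) k \<le> mnk (Suc (2*n)) k"
    by (rule mnk_anti) (use mnk_mono_step in auto)
  then show "mnk (2 * Suc n + 1) k \<le> mnk (2 * n + 1) k" by simp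
qed

lemma mnk_harm: "harm (Suc k) \<le> (\<Sum>j\<le>k. mnk (Suc n) j)"
proof -
  have "harm (Suc k) = (\<Sum>j\<le>k. inverse (real (Suc j)))"
    by (simp add: harm_altdef lessThan_Suc_atMost)
  also have "\<dots> \<le> (\<Sum>j\<le>k. mnk (Suc n) j)"
  proof (rule sum_mono)
    fix j assume "j \<in> {..k}"
    have "(\<Sum>i\<le>j. mnk n i) \<le> (\<Sum>i\<le>j. 1)" by (intro sum_mono mnk_le1)
    then have "(\<Sum>i\<le>j. mnk n i) \<le> real (Suc j)" by simp
    moreover have "1 \<le> (\<Sum>i\<le>j. mnk n i)" by (rule mnk_sum_ge1)
    ultimately show "inverse (real (Suc j)) \<le> mnk (Suc n) j"
      by (simp add: inverse_eq_divide frac_le)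
  qed
  finally show ?thesis .
qed

lemma mnk_lim0:
  assumes "n \<ge> 2"
  shows "(\<lambda>k. mnk n k) \<longlonglongrightarrow> 0"
proof -
  obtain p where p: "n = Suc (Suc p)" using assms by (metis add_2_eq_Suc le_Suc_ex)
  have h: "filterlim (\<lambda>k. harm (Suc k) :: real) at_top sequentially"
    using harm_at_top filterlim_sequentially_Suc by blast
  have "filterlim (\<lambda>k. \<Sum>j\<le>k. mnk (Suc p) j) at_top sequentially"
    by (rule filterlim_at_top_mono[OF h]) (intro always_eventually allI mnk_harm)
  then have "(\<lambda>k. inverse (\<Sum>j\<le>k. mnk (Suc p) j)) \<longlonglongrightarrow> 0"
    by (rule tendsto_inverse_0_at_top)
  then show ?thesis using p by (simp add: inverse_eq_divide)
qed


lemma mnk_conv: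
  fixes m :: "nat \<Rightarrow> real"
  assumes m0: "m 0 = 1"
    and mpos: "\<And>n. m n > 0"
    and mrec: "\<And>n. n \<ge> 1 \<Longrightarrow> (\<Sum>i\<le>n. m i) * m n = 1"
  shows "(\<lambda>n. mnk (2*n) k) \<longlonglongrightarrow> m k \<and> (\<lambda>n. mnk (2*n+1) k) \<longlonglongrightarrow> m k"
proof (induction k rule: less_induct)
  case (less k)
  obtain L where L: "(\<lambda>n. mnk (2*n) k) \<longlonglongrightarrow> L"
  proof -
    have "\<forall>i. mnk (2*i) k \<le> 1" using mnk_le1 by blast
    from incseq_convergent[OF mnk_inc this] show ?thesis using that by blast
  qed
  obtain U where U: "(\<lambda>n. mnk (2*n+1) k) \<longlonglongrightarrow> U"
  proof -
    have "\<forall>i. 0 \<le> mnk (2*i+1) k" using mnk_nonneg by blast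
    from decseq_convergent[OF mnk_dec this] show ?thesis using that by blast
  qed
  have L0: "0 \<le> L" by (rule LIMSEQ_le_const[OF L]) (auto simp: mnk_nonneg)
  have U0: "0 \<le> U" by (rule LIMSEQ_le_const[OF U]) (use mnk_nonneg in blast)
  show ?case
  proof (cases k)
    case 0
    then show ?thesis using m0 by (simp add: mnk_at0)
  next
    case (Suc k')
    define S where "S = (\<Sum>j<k. m j)"
    have S1: "1 \<le> S"
    proof -
      have "m 0 \<le> S" unfolding S_def
        by (rule member_le_sum) (auto simp: Suc less_imp_le[OF mpos])
      then show ?thesis using m0 by simp
    qed
    have A: "(\<lambda>n. \<Sum>j<k. mnk (2*n) j) \<longlonglongrightarrow> S"
      unfolding S_def by (intro tendsto_sum) (use less in auto)
    have B: "(\<lambda>n. \<Sum>j<k. mnk (2*n+1) j) \<longlonglongrightarrow> S"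
      unfolding S_def by (intro tendsto_sum) (use less in auto)
    have split: "\<And>f. (\<Sum>j\<le>k. f j) = (\<Sum>j<k. f j) + (f k :: real)"
      by (simp add: Suc lessThan_Suc_atMost[symmetric])
    have "(\<lambda>n. 1 / ((\<Sum>j<k. mnk (2*n) j) + mnk (2*n) k)) \<longlonglongrightarrow> 1 / (S + L)"
      using S1 L0 by (intro tendsto_intros A L) auto
    moreover have "(\<lambda>n. mnk (2*n+1) k) = (\<lambda>n. 1 / ((\<Sum>j<k. mnk (2*n) j) + mnk (2*n) k))"
      by (auto simp: split)
    ultimately have U': "(\<lambda>n. mnk (2*n+1) k) \<longlonglongrightarrow> 1 / (S + L)" by simp
    have "(\<lambda>n. 1 / ((\<Sum>j<k. mnk (2*n+1) j) + mnk (2*n+1) k)) \<longlonglongrightarrow> 1 / (S + U)"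
      using S1 U0 by (intro tendsto_intros B U) auto
    moreover have "(\<lambda>n. mnk (2*Suc n) k) = (\<lambda>n. 1 / ((\<Sum>j<k. mnk (2*n+1) j) + mnk (2*n+1) k))"
      by (auto simp: split)
    ultimately have "(\<lambda>n. mnk (2*Suc n) k) \<longlonglongrightarrow> 1 / (S + U)" by simp
    then have L': "(\<lambda>n. mnk (2*n) k) \<longlonglongrightarrow> 1 / (S + U)"
      by (rule LIMSEQ_imp_Suc)
    have eU: "U = 1 / (S + L)" using LIMSEQ_unique[OF U U'] .
    have eL: "L = 1 / (S + U)" using LIMSEQ_unique[OF L L'] .
    have e1: "U * (S + L) = 1" using eU S1 L0 by (simp add: field_simps)
    have e2: "L * (S + U) = 1" using eL S1 U0 by (simp add: field_simps)
    have e1': "U * S + U * L = 1" using e1 by (simp add: algebra_simps)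
    have e2': "L * S + U * L = 1" using e2 by (simp add: algebra_simps)
    have "U * S = L * S" using e1' e2' by linarith
    then have UL: "U = L" using S1 by simp
    have em: "m k * (S + m k) = 1"
    proof -
      have "(\<Sum>i\<le>k. m i) = S + m k" unfolding S_def by (rule split)
      then show ?thesis using mrec[of k] Suc by (simp add: algebra_simps)
    qed
    have "(m k - L) * (S + m k + L) = 0"
      using em e2 UL by (simp add: algebra_simps)
    moreover have "S + m k + L > 0" using S1 L0 mpos[of k] by simp
    ultimately have "L = m k" by simp
    then show ?thesis using L U UL by simp
  qed
qed

lemma no_atom:
  fixes \<mu> :: "real measure"
  assumes n: "n \<ge> 2" and ps: "prob_space \<mu>" and sb: "sets \<mu> = sets borel"
    and m1: "measure \<mu> {0..1} = 1"
    and mom: "\<forall>k. integrable \<mu> (\<lambda>t. t ^ k) \<and> (\<integral>t. t ^ k \<partial>\<mu>) = mnk n k"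
  shows "measure \<mu> {1} = 0"
proof -
  interpret prob_space \<mu> by (rule ps)
  have ev01: "{0..1::real} \<in> events" using sb by simp
  have ev1: "{1::real} \<in> events" using sb by simp
  have ae: "AE x in \<mu>. x \<in> {0..1}" using AE_prob_1[OF m1] .
  have le: "measure \<mu> {1} \<le> mnk n k" for k
  proof -
    have "measure \<mu> {1} = (\<integral>t. indicator {1} t \<partial>\<mu>)"
      using ev1 sets.sets_into_space[OF ev1] by (simp add: Int_absorb2)
    also have "\<dots> \<le> (\<integral>t. t ^ k \<partial>\<mu>)"
    proof (rule integral_mono_AE)
      show "integrable \<mu> (indicator {1} :: real \<Rightarrow> real)"
        using ev1 by (simp add: integrable_indicator_iff less_top[symmetric])
      show "integrable \<mu> (\<lambda>t. t ^ k)" using mom by blast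
      show "AE x in \<mu>. indicator {1} x \<le> x ^ k"
        using ae by eventually_elim (auto simp: indicator_def)
    qed
    also have "\<dots> = mnk n k" using mom by blast
    finally show ?thesis .
  qed
  have "measure \<mu> {1} \<le> 0"
    by (rule LIMSEQ_le_const[OF mnk_lim0[OF n]]) (use le in auto)
  then show ?thesis using measure_nonneg[of \<mu> "{1}"] by linarith
qed

theorem lemma2p1:
  fixes m :: "nat \<Rightarrow> real"
  assumes m0: "m 0 = 1"
    and mpos: "\<And>n. m n > 0"
    and mrec: "\<And>n. n \<ge> 1 \<Longrightarrow> (\<Sum>i\<le>n. m i) * m n = 1"
  shows "(\<forall>k. incseq (\<lambda>n. mnk (2*n) k) \<and> decseq (\<lambda>n. mnk (2*n+1) k)
              \<and> (\<lambda>n. mnk (2*n) k) \<longlonglongrightarrow> m k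
              \<and> (\<lambda>n. mnk (2*n+1) k) \<longlonglongrightarrow> m k)
         \<and> (\<forall>n\<ge>2. (\<lambda>k. mnk n k) \<longlonglongrightarrow> 0)
         \<and> (\<forall>n\<ge>2. \<forall>\<mu> :: real measure.
           prob_space \<mu> \<and> sets \<mu> = sets borel \<and> measure \<mu> {0..1} = 1
           \<and> (\<forall>k. integrable \<mu> (\<lambda>t. t ^ k) \<and> (\<integral>t. t ^ k \<partial>\<mu>) = mnk n k)
           \<longrightarrow> measure \<mu> {1} = 0)"
proof (intro conjI allI impI)
  fix k
  show "incseq (\<lambda>n. mnk (2*n) k)" by (rule mnk_inc)
  show "decseq (\<lambda>n. mnk (2*n+1) k)" by (rule mnk_dec)
  show "(\<lambda>n. mnk (2*n) k) \<longlonglongrightarrow> m k" using mnk_conv[OF m0 mpos mrec] by blast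
  show "(\<lambda>n. mnk (2*n+1) k) \<longlonglongrightarrow> m k" using mnk_conv[OF m0 mpos mrec] by blast
next
  fix n :: nat assume "2 \<le> n"
  then show "(\<lambda>k. mnk n k) \<longlonglongrightarrow> 0" by (rule mnk_lim0)
next
  fix n :: nat and \<mu> :: "real measure"
  assume "2 \<le> n"
    and h: "prob_space \<mu> \<and> sets \<mu> = sets borel \<and> measure \<mu> {0..1} = 1
           \<and> (\<forall>k. integrable \<mu> (\<lambda>t. t ^ k) \<and> (\<integral>t. t ^ k \<partial>\<mu>) = mnk n k)"
  then show "measure \<mu> {1} = 0" using no_atom[of n \<mu>] by blast
qed

end
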